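(* There is an absolute constant $C$ such that the following holds. Let $s\ge2$ be an integer, $m\le s^{1/10}$ and $\delta=s^{-1/3}$. For any points $x_1,\dots,x_m\in\mathbb{R}^2$, with probability at least $1-Cs^{-1/10}$ over $\theta,a_1,\dots,a_{s-1},z$: (1) every pair $x_i,x_j$ with $|x_i-x_j|>\delta$ do not both belong to the same set $S_k$, for any $k\in\{1,\dots,s\}$; (2) every pair $x_i,x_j$ with $|x_i-x_j|\le\delta$ lie on the same side of the line $\{x:\langle x,\theta^\perp\rangle=z\}$.
   Context: $\theta$ is a uniformly random unit vector in $\mathbb{R}^2$ and $\theta^\perp$ its $90^\circ$ clockwise rotation; $a_1,\dots,a_{s-1}$ are independent uniform on $[-1,1]$, sorted increasingly, with $a_0=-1$, $a_s=1$; $z$ is uniform on $[-1,1]$; all independent. For $k=1,\dots,s$, $S_k=\{x\in\mathbb{R}^2:a_{k-1}<\langle x,\theta\rangle\le a_k\}$. *)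

theory Defs
  imports "HOL-Probability.Probability"
begin

text \<open>Sample point: (phi, (a, z)), theta = (cos phi, sin phi) with phi uniform on [0, 2pi);
  a : nat => real with a 1, ..., a (s-1) iid uniform on [-1,1]; z uniform on [-1,1].\<close>

definition sample_space :: "nat \<Rightarrow> (real \<times> (nat \<Rightarrow> real) \<times> real) measure" where
  "sample_space s =
     uniform_measure lborel {0..<2*pi}
     \<Otimes>\<^sub>M ((\<Pi>\<^sub>M i\<in>{1..<s}. uniform_measure lborel {-1..1})
     \<Otimes>\<^sub>M uniform_measure lborel {-1..1})"

definition theta :: "real \<Rightarrow> real \<times> real" where
  "theta phi = (cos phi, sin phi)"

definition theta_perp :: "real \<Rightarrow> real \<times> real" where
  "theta_perp phi = (sin phi, - cos phi)"

text \<open>sorted breakpoints a_0 = -1 < a_1 <= ... <= a_{s-1} < a_s = 1\<close>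
definition breakpt :: "nat \<Rightarrow> (nat \<Rightarrow> real) \<Rightarrow> nat \<Rightarrow> real" where
  "breakpt s a k = (if k = 0 then -1 else if k = s then 1
                    else sort (map a [1..<s]) ! (k - 1))"

definition strip :: "nat \<Rightarrow> real \<Rightarrow> (nat \<Rightarrow> real) \<Rightarrow> nat \<Rightarrow> (real \<times> real) set" where
  "strip s phi a k = {x. breakpt s a (k - 1) < x \<bullet> theta phi \<and> x \<bullet> theta phi \<le> breakpt s a k}"

definition good_event :: "nat \<Rightarrow> nat \<Rightarrow> (nat \<Rightarrow> real \<times> real) \<Rightarrow> real \<Rightarrow>
    (real \<times> (nat \<Rightarrow> real) \<times> real) \<Rightarrow> bool" where
  "good_event s m x \<delta> \<omega> = (case \<omega> of (phi, a, z) \<Rightarrow>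
     (\<forall>i\<in>{1..m}. \<forall>j\<in>{1..m}. i \<noteq> j \<longrightarrow> dist (x i) (x j) > \<delta> \<longrightarrow>
        (\<forall>k\<in>{1..s}. \<not> (x i \<in> strip s phi a k \<and> x j \<in> strip s phi a k))) \<and>
     (\<forall>i\<in>{1..m}. \<forall>j\<in>{1..m}. i \<noteq> j \<longrightarrow> dist (x i) (x j) \<le> \<delta> \<longrightarrow>
        ((x i \<bullet> theta_perp phi < z \<and> x j \<bullet> theta_perp phi < z) \<or>
         (x i \<bullet> theta_perp phi > z \<and> x j \<bullet> theta_perp phi > z))))"

end

theory Submission
  imports Defs
begin

lemma sorted_nth_less_iff:
  fixes L :: "real list"
  assumes "sorted L" "j < length L"
  shows "L ! j < p \<longleftrightarrow> j < length (filter (\<lambda>y. y < p) L)"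
  using assms
proof (induction L arbitrary: j)
  case Nil then show ?case by simp
next
  case (Cons x xs)
  have allge: "\<forall>y\<in>set xs. x \<le> y" using Cons.prems(1) by simp
  show ?case
  proof (cases "x < p")
    case True
    show ?thesis
    proof (cases j)
      case 0 then show ?thesis using True by simp
    next
      case (Suc j')
      then show ?thesis using True Cons by auto
    qed
  next
    case False
    have "filter (\<lambda>y. y < p) xs = []" using allge False by (auto simp: filter_empty_conv)
    moreover have "\<not> (x # xs) ! j < p"
    proof (cases j)
      case 0 then show ?thesis using False by simp
    next
      case (Suc j')
      then have "xs ! j' \<in> set xs" using Cons.prems by auto
      then show ?thesis using allge False Suc by auto
    qed
    ultimately show ?thesis using False by simp
  qed
qed

definition Ncnt :: "nat \<Rightarrow> (nat \<Rightarrow> real) \<Rightarrow> real \<Rightarrow> nat" where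
  "Ncnt s a p = card {l\<in>{1..<s}. a l < p}"

lemma sort_nth_less_iff:
  assumes "j < s - 1"
  shows "sort (map a [1..<s]) ! j < p \<longleftrightarrow> j < Ncnt s a p"
proof -
  have "length (filter (\<lambda>y. y < p) (sort (map a [1..<s]))) = length (filter (\<lambda>y. y < p) (map a [1..<s]))"
    by (simp add: filter_sort)
  also have "\<dots> = length (filter (\<lambda>l. a l < p) [1..<s])" by (simp add: filter_map o_def)
  also have "\<dots> = card {l\<in>{1..<s}. a l < p}"
    by (subst distinct_card[symmetric]) (auto intro!: arg_cong[where f=card])
  finally show ?thesis using assms
    by (subst sorted_nth_less_iff) (auto simp: Ncnt_def)
qed

lemma strip_iff:
  assumes "1 \<le> k" "k \<le> s"
  shows "y \<in> strip s phi a k \<longleftrightarrow>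
    Ncnt s a (y \<bullet> theta phi) = k - 1 \<and> (k = 1 \<longrightarrow> -1 < y \<bullet> theta phi) \<and> (k = s \<longrightarrow> y \<bullet> theta phi \<le> 1)"
proof -
  define p where "p = y \<bullet> theta phi"
  have N: "Ncnt s a p \<le> s - 1"
  proof -
    have "Ncnt s a p \<le> card {1..<s}" unfolding Ncnt_def by (rule card_mono) auto
    then show ?thesis by simp
  qed
  have lo: "breakpt s a (k - 1) < p \<longleftrightarrow> (k = 1 \<longrightarrow> -1 < p) \<and> (k \<noteq> 1 \<longrightarrow> k - 2 < Ncnt s a p)"
    using assms sort_nth_less_iff[of "k-2" s a p] by (auto simp: breakpt_def numeral_2_eq_2)
  have hi: "p \<le> breakpt s a k \<longleftrightarrow> (k = s \<longrightarrow> p \<le> 1) \<and> (k \<noteq> s \<longrightarrow> \<not> k - 1 < Ncnt s a p)"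
  proof (cases "k = s")
    case False
    then have "k - 1 < s - 1" using assms by arith
    then show ?thesis using assms False sort_nth_less_iff[of "k-1" s a p] by (auto simp: breakpt_def not_less)
  qed (use assms in \<open>auto simp: breakpt_def\<close>)
  show ?thesis
    unfolding strip_def mem_Collect_eq p_def[symmetric] lo hi using N assms by auto
qed

lemma sin_ge_half:
  fixes y :: real
  assumes "0 \<le> y" "y \<le> pi/2"
  shows "y / 2 \<le> sin y"
proof (cases "y \<le> pi/3")
  case True
  have "(\<lambda>x. sin x - x/2) 0 \<le> (\<lambda>x. sin x - x/2) y"
  proof (rule DERIV_nonneg_imp_increasing_open[OF assms(1)])
    fix x assume x: "0 < x" "x < y"
    have "cos (pi/3) \<le> cos x"
      using x True by (intro cos_monotone_0_pi_le) auto
    then have "cos x - 1/2 \<ge> 0" by (simp add: cos_60)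
    moreover have "DERIV (\<lambda>x. sin x - x/2) x :> cos x - 1/2"
      by (auto intro!: derivative_eq_intros)
    ultimately show "\<exists>d. DERIV (\<lambda>x. sin x - x/2) x :> d \<and> d \<ge> 0" by blast
  qed (auto intro!: continuous_intros)
  then show ?thesis by simp
next
  case False
  have "sin (pi/3) \<le> sin y"
    using False assms by (intro sin_monotone_2pi_le) auto
  moreover have "sqrt 3 / 2 \<ge> 0.8"
  proof -
    have "1.6 \<le> sqrt 3" by (rule real_le_rsqrt) (simp add: power2_eq_square)
    then show ?thesis by simp
  qed
  moreover have "y/2 \<le> 0.8" using assms pi_approx by simp
  ultimately show ?thesis by (simp add: sin_60)
qed

lemma abs_sin_ge_half:
  fixes y :: real
  assumes "\<bar>y\<bar> \<le> pi/2"
  shows "\<bar>y\<bar> / 2 \<le> \<bar>sin y\<bar>"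
proof (cases "y \<ge> 0")
  case True then show ?thesis using sin_ge_half[of y] assms by simp
next
  case False then show ?thesis using sin_ge_half[of "-y"] assms by simp
qed

lemma angle_cover:
  fixes w :: "real \<times> real" and t :: real
  assumes "w \<noteq> 0"
  obtains \<alpha> where "\<And>phi. phi \<in> {0..<2*pi} \<Longrightarrow> \<bar>w \<bullet> theta phi\<bar> < t \<Longrightarrow>
      \<exists>k\<in>{-2..1::int}. \<bar>phi - (\<alpha> + pi/2 + of_int k * pi)\<bar> \<le> 2 * t / norm w"
proof -
  obtain w1 w2 where w: "w = (w1, w2)" by (cases w)
  define r where "r = norm w"
  have r: "r > 0" using assms by (simp add: r_def)
  have r2: "r^2 = w1^2 + w2^2" by (simp add: r_def w norm_Pair)
  have nz: "w1^2 + w2^2 \<noteq> 0" using r r2 by (metis less_numeral_extra(3) zero_less_power)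
  have "(w1/r)^2 + (w2/r)^2 = 1" using r r2 nz by (simp add: power_divide add_divide_distrib[symmetric])
  then obtain \<alpha> where al: "0 \<le> \<alpha>" "\<alpha> < 2*pi" "w1/r = cos \<alpha>" "w2/r = sin \<alpha>"
    by (rule sincos_total_2pi)
  show ?thesis
  proof (rule that[of \<alpha>])
    fix phi assume phi: "phi \<in> {0..<2*pi}" "\<bar>w \<bullet> theta phi\<bar> < t"
    define \<psi> where "\<psi> = phi - \<alpha> - pi/2"
    define k where "k = \<lfloor>\<psi>/pi + 1/2\<rfloor>"
    define d where "d = \<psi> - of_int k * pi"
    have "w \<bullet> theta phi = r * (cos \<alpha> * cos phi + sin \<alpha> * sin phi)"
      using al r by (simp add: w theta_def inner_Pair field_simps)
    also have "\<dots> = r * cos (phi - \<alpha>)" by (simp add: cos_diff)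
    also have "phi - \<alpha> = \<psi> + pi/2" by (simp add: \<psi>_def)
    also have "cos (\<psi> + pi/2) = - sin \<psi>" by (simp add: cos_add)
    also have "\<psi> = d + pi * of_int k" by (simp add: d_def)
    finally have eq: "\<bar>w \<bullet> theta phi\<bar> = r * \<bar>sin d\<bar>"
      using r by (simp add: sin_add abs_mult)
    have k1: "of_int k \<le> \<psi>/pi + 1/2" "\<psi>/pi + 1/2 < of_int k + 1" unfolding k_def by linarith+
    have a1: "of_int k * pi \<le> (\<psi>/pi + 1/2) * pi" using k1(1) pi_gt_zero by (intro mult_right_mono) auto
    have a2: "(\<psi>/pi + 1/2) * pi < (of_int k + 1) * pi" using k1(2) pi_gt_zero by (intro mult_strict_right_mono) auto
    have "(\<psi>/pi + 1/2) * pi = \<psi> + pi/2" by (simp add: field_simps)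
    then have "-(pi/2) \<le> d" "d \<le> pi/2" using a1 a2 unfolding d_def by (simp_all add: algebra_simps)
    then have dpi: "\<bar>d\<bar> \<le> pi/2" by linarith
    have "\<bar>d\<bar> / 2 \<le> \<bar>sin d\<bar>" by (rule abs_sin_ge_half[OF dpi])
    then have "r * \<bar>d\<bar> \<le> r * (2 * \<bar>sin d\<bar>)" using r by (intro mult_left_mono) auto
    then have "r * \<bar>d\<bar> \<le> 2 * t" using eq phi(2) by linarith
    then have "\<bar>d\<bar> \<le> 2 * t / r" using r by (simp add: field_simps)
    moreover have "k \<in> {-2..1}"
    proof -
      have "\<psi> > -5/2*pi" "\<psi> < 3/2 * pi" using phi(1) al unfolding \<psi>_def by auto
      then have "\<psi>/pi > -5/2" "\<psi>/pi < 3/2" by (simp_all add: less_divide_eq divide_less_eq)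
      then have "real_of_int k < 2" "real_of_int k > -3" using k1 by linarith+
      then show ?thesis by auto
    qed
    ultimately show "\<exists>k\<in>{-2..1::int}. \<bar>phi - (\<alpha> + pi/2 + of_int k * pi)\<bar> \<le> 2 * t / norm w"
      unfolding r_def by (intro bexI[of _ k]) (auto simp: d_def \<psi>_def algebra_simps)
  qed
qed

lemma Ncnt_real: "real (Ncnt s a p) = (\<Sum>l\<in>{1..<s}. if a l < p then 1 else 0)"
  by (simp add: Ncnt_def sum.If_cases Int_def)

lemma meas_test:
  fixes f :: "real \<Rightarrow> real"
  assumes [measurable]: "f \<in> borel_measurable borel"
  shows "Measurable.pred (sample_space s)
    (\<lambda>\<omega>. (\<Sum>l\<in>{1..<s}. if fst (snd \<omega>) l < f (fst \<omega>) then 1 else 0 :: real) = real k)"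
  unfolding sample_space_def by measurable

lemma meas_test2:
  fixes y :: "real \<times> real"
  shows "Measurable.pred (sample_space s)
    (\<lambda>\<omega>. (\<Sum>l\<in>{1..<s}. if fst (snd \<omega>) l < y \<bullet> theta (fst \<omega>) then 1 else 0 :: real) = real k)"
  unfolding sample_space_def theta_def by measurable

abbreviation "UZ \<equiv> uniform_measure lborel {-1..1::real}"
abbreviation "UPhi \<equiv> uniform_measure lborel {0..<2*pi}"
abbreviation "PA s \<equiv> PiM {1..<s} (\<lambda>_. UZ)"

lemma ps_UZ: "prob_space UZ"
  by (rule prob_space_uniform_measure) auto
lemma ps_UPhi: "prob_space UPhi"
  by (rule prob_space_uniform_measure) auto
lemma ps_PA: "prob_space (PA s)"
  by (rule prob_space_PiM) (rule ps_UZ)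
lemma ps_R: "prob_space (PA s \<Otimes>\<^sub>M UZ)"
  by (rule prob_space_pair[OF ps_PA ps_UZ])
lemma ps_M: "prob_space (sample_space s)"
  unfolding sample_space_def by (rule prob_space_pair[OF ps_UPhi ps_R])

lemma section_le:
  assumes "sigma_finite_measure M2" "A \<in> sets (M1 \<Otimes>\<^sub>M M2)"
    "\<And>x. x \<in> space M1 \<Longrightarrow> emeasure M2 (Pair x -` A) \<le> f x"
  shows "emeasure (M1 \<Otimes>\<^sub>M M2) A \<le> (\<integral>\<^sup>+x. f x \<partial>M1)"
  unfolding sigma_finite_measure.emeasure_pair_measure_alt[OF assms(1,2)]
  by (rule nn_integral_mono) (rule assms(3))

lemma section_le_const:
  assumes "prob_space M1" "sigma_finite_measure M2" "A \<in> sets (M1 \<Otimes>\<^sub>M M2)"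
    "\<And>x. x \<in> space M1 \<Longrightarrow> emeasure M2 (Pair x -` A) \<le> c"
  shows "emeasure (M1 \<Otimes>\<^sub>M M2) A \<le> c"
proof -
  have "emeasure (M1 \<Otimes>\<^sub>M M2) A \<le> (\<integral>\<^sup>+x. c \<partial>M1)" by (rule section_le[OF assms(2-4)])
  also have "\<dots> = c" using prob_space.emeasure_space_1[OF assms(1)] by simp
  finally show ?thesis .
qed

lemma norm_theta_perp: "norm (theta_perp phi) = 1"
  by (simp add: theta_perp_def norm_Pair)
lemma norm_theta: "norm (theta phi) = 1"
  by (simp add: theta_def norm_Pair)

definition bad2 :: "(nat \<Rightarrow> real \<times> real) \<Rightarrow> nat \<Rightarrow> nat \<Rightarrow> real \<times> (nat \<Rightarrow> real) \<times> real \<Rightarrow> bool" where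
  "bad2 x i j \<omega> = (\<not> ((x i \<bullet> theta_perp (fst \<omega>) < snd (snd \<omega>) \<and> x j \<bullet> theta_perp (fst \<omega>) < snd (snd \<omega>)) \<or>
         (x i \<bullet> theta_perp (fst \<omega>) > snd (snd \<omega>) \<and> x j \<bullet> theta_perp (fst \<omega>) > snd (snd \<omega>))))"

lemma bad2_meas: "{\<omega> \<in> space (sample_space s). bad2 x i j \<omega>} \<in> sets (sample_space s)"
  unfolding sample_space_def bad2_def theta_perp_def by measurable

lemma bad2_bound:
  assumes "dist (x i) (x j) \<le> \<delta>"
  shows "measure (sample_space s) {\<omega> \<in> space (sample_space s). bad2 x i j \<omega>} \<le> \<delta> / 2"
proof -
  define B where "B = {\<omega> \<in> space (sample_space s). bad2 x i j \<omega>}"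
  interpret UZ: prob_space UZ by (rule ps_UZ)
  interpret R: prob_space "PA s \<Otimes>\<^sub>M UZ" by (rule ps_R)
  have d0: "0 \<le> \<delta>" using assms zero_le_dist order_trans by blast
  have inner: "emeasure UZ (Pair a -` (Pair phi -` B)) \<le> ennreal (\<delta>/2)" for phi a
  proof -
    define u1 where "u1 = x i \<bullet> theta_perp phi"
    define u2 where "u2 = x j \<bullet> theta_perp phi"
    have "\<bar>u1 - u2\<bar> = \<bar>(x i - x j) \<bullet> theta_perp phi\<bar>" by (simp add: u1_def u2_def inner_diff_left)
    also have "\<dots> \<le> norm (x i - x j) * norm (theta_perp phi)" by (rule Cauchy_Schwarz_ineq2)
    also have "\<dots> = dist (x i) (x j)" by (simp add: norm_theta_perp dist_norm)
    finally have uu: "\<bar>u1 - u2\<bar> \<le> \<delta>" using assms by linarith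
    have sub: "Pair a -` (Pair phi -` B) \<subseteq> {min u1 u2 .. max u1 u2}"
      by (auto simp: B_def bad2_def u1_def u2_def)
    have "emeasure UZ (Pair a -` (Pair phi -` B)) \<le> emeasure UZ {min u1 u2 .. max u1 u2}"
      by (rule emeasure_mono[OF sub]) simp
    also have "\<dots> = emeasure lborel ({-1..1} \<inter> {min u1 u2 .. max u1 u2}) / emeasure lborel {-1..1::real}"
      by simp
    also have "\<dots> \<le> emeasure lborel {min u1 u2 .. max u1 u2} / ennreal 2"
    proof -
      have e2: "emeasure lborel {-1..1::real} = ennreal 2" by simp
      have "emeasure lborel ({-1..1} \<inter> {min u1 u2 .. max u1 u2}) \<le> emeasure lborel {min u1 u2 .. max u1 u2}"
        by (rule emeasure_mono) auto
      then show ?thesis unfolding e2 by (rule divide_right_mono_ennreal)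
    qed
    also have "\<dots> = ennreal (max u1 u2 - min u1 u2) / ennreal 2" by simp
    also have "\<dots> = ennreal ((max u1 u2 - min u1 u2) / 2)" by (subst divide_ennreal) auto
    also have "\<dots> \<le> ennreal (\<delta>/2)" using uu by (intro ennreal_leI) auto
    finally show ?thesis .
  qed
  have B: "B \<in> sets (sample_space s)" unfolding B_def by (rule bad2_meas)
  have "emeasure (sample_space s) B \<le> ennreal (\<delta>/2)"
    unfolding sample_space_def
  proof (rule section_le_const[OF ps_UPhi R.sigma_finite_measure_axioms])
    show "B \<in> sets (UPhi \<Otimes>\<^sub>M (PA s \<Otimes>\<^sub>M UZ))" using B[unfolded sample_space_def] .
    fix phi
    show "emeasure (PA s \<Otimes>\<^sub>M UZ) (Pair phi -` B) \<le> ennreal (\<delta>/2)"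
    proof (rule section_le_const[OF ps_PA UZ.sigma_finite_measure_axioms])
      show "Pair phi -` B \<in> sets (PA s \<Otimes>\<^sub>M UZ)"
        using B[unfolded sample_space_def] by (rule sets_Pair1)
    qed (rule inner)
  qed
  then show ?thesis unfolding B_def[symmetric]
    using finite_measure.emeasure_eq_measure[OF prob_space.finite_measure[OF ps_M]] d0 by (simp add: ennreal_le_iff)
qed

lemma Ncnt_le: "Ncnt s a p \<le> s - 1"
proof -
  have "Ncnt s a p \<le> card {1..<s}" unfolding Ncnt_def by (rule card_mono) auto
  then show ?thesis by simp
qed

lemma Ncnt_strict:
  assumes "l \<in> {1..<s}" "p \<le> a l" "a l < q"
  shows "Ncnt s a p < Ncnt s a q"
  unfolding Ncnt_def
proof (rule psubset_card_mono)
  show "{l \<in> {1..<s}. a l < p} \<subset> {l \<in> {1..<s}. a l < q}"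
  proof
    show "{l \<in> {1..<s}. a l < p} \<subseteq> {l \<in> {1..<s}. a l < q}" using assms by auto
    show "{l \<in> {1..<s}. a l < p} \<noteq> {l \<in> {1..<s}. a l < q}"
    proof
      assume eq: "{l \<in> {1..<s}. a l < p} = {l \<in> {1..<s}. a l < q}"
      have "l \<in> {l \<in> {1..<s}. a l < q}" using assms by simp
      then have "l \<in> {l \<in> {1..<s}. a l < p}" by (simp only: eq)
      then show False using assms by simp
    qed
  qed
qed simp

lemma strip_range:
  assumes a: "\<forall>l\<in>{1..<s}. -1 \<le> a l \<and> a l \<le> 1" and k: "1 \<le> k" "k \<le> s"
    and y: "y \<in> strip s phi a k"
  shows "-1 \<le> y \<bullet> theta phi \<and> y \<bullet> theta phi \<le> 1"
proof -
  define p where "p = y \<bullet> theta phi"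
  have N: "Ncnt s a p = k - 1" "k = 1 \<longrightarrow> -1 < p" "k = s \<longrightarrow> p \<le> 1"
    using iffD1[OF strip_iff[OF k] y] unfolding p_def by blast+
  have lo: "-1 \<le> p"
  proof (cases "k = 1")
    case False
    then have "card {l\<in>{1..<s}. a l < p} \<noteq> 0" using N k by (simp add: Ncnt_def)
    then have "{l\<in>{1..<s}. a l < p} \<noteq> {}" by (metis card.empty)
    then obtain l where "l \<in> {1..<s}" "a l < p" by blast
    then have "-1 \<le> a l" using a by blast
    then show ?thesis using \<open>a l < p\<close> by linarith
  qed (use N in simp)
  have hi: "p \<le> 1"
  proof (cases "k = s")
    case False
    have "\<exists>l\<in>{1..<s}. \<not> a l < p"
    proof (rule ccontr)
      assume "\<not> ?thesis"
      then have "{l\<in>{1..<s}. a l < p} = {1..<s}" by auto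
      then have "Ncnt s a p = s - 1" by (simp add: Ncnt_def)
      then show False using N False k by simp
    qed
    then obtain l where "l \<in> {1..<s}" "\<not> a l < p" by blast
    then have "a l \<le> 1" using a by blast
    then show ?thesis using \<open>\<not> a l < p\<close> by linarith
  qed (use N in simp)
  show ?thesis using lo hi unfolding p_def by linarith
qed

lemma strip_gap:
  assumes k: "1 \<le> k" "k \<le> s"
    and y: "y1 \<in> strip s phi a k" "y2 \<in> strip s phi a k"
    and l: "l \<in> {1..<s}" "y1 \<bullet> theta phi \<le> a l" "a l < y2 \<bullet> theta phi"
  shows False
proof -
  have "Ncnt s a (y1 \<bullet> theta phi) = Ncnt s a (y2 \<bullet> theta phi)"
    using strip_iff[OF k, of y1 phi a] strip_iff[OF k, of y2 phi a] y by auto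
  then show False using Ncnt_strict[of l s "y1 \<bullet> theta phi" a "y2 \<bullet> theta phi"] l by simp
qed

definition bad1 :: "nat \<Rightarrow> (nat \<Rightarrow> real \<times> real) \<Rightarrow> nat \<Rightarrow> nat \<Rightarrow> real \<times> (nat \<Rightarrow> real) \<times> real \<Rightarrow> bool" where
  "bad1 s x i j \<omega> = (\<exists>k\<in>{1..s}. x i \<in> strip s (fst \<omega>) (fst (snd \<omega>)) k \<and> x j \<in> strip s (fst \<omega>) (fst (snd \<omega>)) k)"

lemma bad1_alt:
  "bad1 s x i j = (\<lambda>\<omega>. \<exists>k\<in>{1..s}.
     ((\<Sum>l\<in>{1..<s}. if fst (snd \<omega>) l < x i \<bullet> theta (fst \<omega>) then 1 else 0 :: real) = real (k - 1) \<and>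
      (k = 1 \<longrightarrow> -1 < x i \<bullet> theta (fst \<omega>)) \<and> (k = s \<longrightarrow> x i \<bullet> theta (fst \<omega>) \<le> 1)) \<and>
     ((\<Sum>l\<in>{1..<s}. if fst (snd \<omega>) l < x j \<bullet> theta (fst \<omega>) then 1 else 0 :: real) = real (k - 1) \<and>
      (k = 1 \<longrightarrow> -1 < x j \<bullet> theta (fst \<omega>)) \<and> (k = s \<longrightarrow> x j \<bullet> theta (fst \<omega>) \<le> 1)))"
  unfolding bad1_def
  apply (intro ext bex_cong[OF refl])
  subgoal premises k for \<omega> k
  proof -
    have k1: "1 \<le> k" "k \<le> s" using k by auto
    show ?thesis
      unfolding strip_iff[OF k1] Ncnt_real[symmetric] of_nat_eq_iff by (rule refl)
  qed
  done

lemma bad1_meas: "{\<omega> \<in> space (sample_space s). bad1 s x i j \<omega>} \<in> sets (sample_space s)"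
  unfolding sample_space_def bad1_alt theta_def by measurable

lemma UZ_X_bound:
  assumes "hi - lo \<ge> t" "t \<le> 1" "0 < t"
  shows "emeasure UZ (if -1 \<le> lo \<and> hi \<le> 1 then {-1..1} - {lo..<hi} else {}) \<le> ennreal (1 - t/2)"
proof (cases "-1 \<le> lo \<and> hi \<le> 1")
  case True
  have lohi: "lo \<le> hi" using assms by linarith
  have "emeasure UZ ({-1..1} - {lo..<hi}) = emeasure lborel ({-1..1} \<inter> ({-1..1} - {lo..<hi})) / emeasure lborel {-1..1::real}"
    by (rule emeasure_uniform_measure) auto
  also have "{-1..1} \<inter> ({-1..1} - {lo..<hi}) = {-1..1::real} - {lo..<hi}" by auto
  also have "emeasure lborel ({-1..1::real} - {lo..<hi}) = emeasure lborel {-1..1::real} - emeasure lborel {lo..<hi}"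
    using True lohi by (intro emeasure_Diff) auto
  also have "\<dots> = ennreal (2 - (hi - lo))" using lohi by (simp add: ennreal_minus[symmetric])
  also have "emeasure lborel {-1..1::real} = ennreal 2" by simp
  also have "ennreal (2 - (hi - lo)) / ennreal 2 = ennreal ((2 - (hi - lo)) / 2)"
    using True lohi by (intro divide_ennreal) auto
  also have "\<dots> \<le> ennreal (1 - t/2)" using assms by (intro ennreal_leI) auto
  finally show ?thesis using True by simp
next
  case False
  then have "(if -1 \<le> lo \<and> hi \<le> 1 then {-1..1} - {lo..<hi} else {}) = ({}::real set)" by (rule if_not_P)
  then show ?thesis by simp
qed

lemma emeasure_UPhi_E:
  fixes w :: "real \<times> real"
  assumes "w \<noteq> 0" "0 < t"
  shows "emeasure UPhi {phi. \<bar>w \<bullet> theta phi\<bar> < t} \<le> ennreal (3 * t / norm w)"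
proof -
  define E where "E = {phi. \<bar>w \<bullet> theta phi\<bar> < t}"
  have E: "E \<in> sets borel" unfolding E_def theta_def by measurable
  define r where "r = norm w"
  have r: "r > 0" using assms by (simp add: r_def)
  obtain \<alpha> where al: "\<And>phi. phi \<in> {0..<2*pi} \<Longrightarrow> \<bar>w \<bullet> theta phi\<bar> < t \<Longrightarrow>
      \<exists>k\<in>{-2..1::int}. \<bar>phi - (\<alpha> + pi/2 + of_int k * pi)\<bar> \<le> 2 * t / norm w"
    using angle_cover[OF assms(1)] by blast
  define c where "c = (\<lambda>k::int. \<alpha> + pi/2 + of_int k * pi)"
  define I where "I = (\<lambda>k::int. {c k - 2*t/r .. c k + 2*t/r})"
  have sub: "{0..<2*pi} \<inter> E \<subseteq> (\<Union>k\<in>{-2..1}. I k)"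
  proof
    fix phi assume "phi \<in> {0..<2*pi} \<inter> E"
    then obtain k where "k \<in> {-2..1}" "\<bar>phi - c k\<bar> \<le> 2 * t / r"
      using al unfolding E_def c_def r_def by blast
    then have "phi \<in> I k" unfolding I_def by (auto simp: abs_le_iff)
    then show "phi \<in> (\<Union>k\<in>{-2..1}. I k)" using \<open>k \<in> {-2..1}\<close> by blast
  qed
  have tr: "0 \<le> 2 * t / r" using r assms by simp
  have "emeasure lborel ({0..<2*pi} \<inter> E) \<le> emeasure lborel (\<Union>k\<in>{-2..1}. I k)"
    by (rule emeasure_mono[OF sub]) (auto simp: I_def)
  also have "\<dots> \<le> (\<Sum>k\<in>{-2..1}. emeasure lborel (I k))"
    by (rule emeasure_subadditive_finite) (auto simp: I_def)
  also have "\<dots> = (\<Sum>k\<in>{-2..1::int}. ennreal (4 * t / r))"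
    using tr by (intro sum.cong refl) (simp add: I_def)
  also have "\<dots> = ennreal (4 * (4 * t / r))"
    by (subst ennreal_mult) (use tr in auto)
  also have "4 * (4 * t / r) = 16 * t / r" by simp
  finally have A: "emeasure lborel ({0..<2*pi} \<inter> E) \<le> ennreal (16 * t / r)" .
  have "emeasure UPhi E = emeasure lborel ({0..<2*pi} \<inter> E) / emeasure lborel {0..<2*pi}"
    using E by (intro emeasure_uniform_measure) auto
  also have "emeasure lborel {0..<2*pi} = ennreal (2*pi)" by simp
  also have "emeasure lborel ({0..<2*pi} \<inter> E) / ennreal (2*pi) \<le> ennreal (16 * t / r) / ennreal (2*pi)"
    by (rule divide_right_mono_ennreal[OF A])
  also have "\<dots> = ennreal (16 * t / r / (2*pi))" using tr by (intro divide_ennreal) auto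
  also have "\<dots> \<le> ennreal (3 * t / r)"
  proof (rule ennreal_leI)
    have "16 * t / r / (2*pi) = (8 / pi) * (t / r)" by (simp add: field_simps)
    also have "\<dots> \<le> 3 * (t / r)"
      using pi_approx r assms by (intro mult_right_mono) (auto simp: field_simps)
    finally show "16 * t / r / (2*pi) \<le> 3 * t / r" by simp
  qed
  finally show ?thesis unfolding E_def r_def .
qed

lemma emeasure_UZ_Icc: "emeasure UZ {-1..1} = 1"
  by (rule emeasure_uniform_measure_1) auto

lemma bad1_bound:
  assumes s: "s \<ge> 2" and t: "0 < t" "t \<le> 1" and xij: "x i \<noteq> x j"
  shows "measure (sample_space s) {\<omega> \<in> space (sample_space s). bad1 s x i j \<omega>}
           \<le> 3 * t / dist (x i) (x j) + (1 - t/2)^(s-1)"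
proof -
  define B where "B = {\<omega> \<in> space (sample_space s). bad1 s x i j \<omega>}"
  have B: "B \<in> sets (sample_space s)" unfolding B_def by (rule bad1_meas)
  interpret UZ: prob_space UZ by (rule ps_UZ)
  interpret PA: prob_space "PA s" by (rule ps_PA)
  interpret R: prob_space "PA s \<Otimes>\<^sub>M UZ" by (rule ps_R)
  interpret PP: product_prob_space "\<lambda>_. UZ" "{1..<s}" by unfold_locales
  define w where "w = x i - x j"
  have w0: "w \<noteq> 0" using xij by (simp add: w_def)
  define E where "E = {phi. \<bar>w \<bullet> theta phi\<bar> < t}"
  have E: "E \<in> sets borel" unfolding E_def theta_def by measurable
  define c where "c = (1 - t/2)^(s-1)"
  have c0: "0 \<le> c" using t by (simp add: c_def)
  define A1 where "A1 = {a \<in> space (PA s). \<forall>l\<in>{1..<s}. a l \<in> {-1..1::real}}"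
  have A1s: "A1 \<in> sets (PA s)" unfolding A1_def by measurable
  have A1: "emeasure (PA s) A1 = 1"
    unfolding A1_def by (subst PP.emeasure_PiM_Collect) (auto simp: emeasure_UZ_Icc)
  have A1c: "emeasure (PA s) (space (PA s) - A1) = 0"
  proof -
    have "emeasure (PA s) (space (PA s) - A1) = emeasure (PA s) (space (PA s)) - emeasure (PA s) A1"
      by (rule emeasure_compl[OF A1s]) (unfold A1, simp)
    also have "\<dots> = 0" unfolding A1 PA.emeasure_space_1 by simp
    finally show ?thesis .
  qed
  have sec: "emeasure (PA s \<Otimes>\<^sub>M UZ) (Pair phi -` B) \<le> indicator E phi + ennreal c" for phi
  proof (cases "phi \<in> E")
    case True
    have "emeasure (PA s \<Otimes>\<^sub>M UZ) (Pair phi -` B) \<le> 1" by (rule R.subprob_emeasure_le_1)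
    also have "1 \<le> indicator E phi + ennreal c" using True by simp
    finally show ?thesis .
  next
    case False
    define p1 where "p1 = x i \<bullet> theta phi"
    define p2 where "p2 = x j \<bullet> theta phi"
    define lo where "lo = min p1 p2"
    define hi where "hi = max p1 p2"
    have "\<bar>p1 - p2\<bar> \<ge> t" using False by (simp add: E_def w_def p1_def p2_def inner_diff_left)
    then have gap: "hi - lo \<ge> t" by (auto simp: lo_def hi_def)
    define X where "X = (if -1 \<le> lo \<and> hi \<le> 1 then {-1..1} - {lo..<hi} else ({}::real set))"
    have Xs: "X \<in> sets borel" unfolding X_def by auto
    define T1 where "T1 = {a \<in> space (PA s). \<forall>l\<in>{1..<s}. a l \<in> X}"
    have T1s: "T1 \<in> sets (PA s)" unfolding T1_def using Xs by measurable
    have sub: "Pair phi -` B \<subseteq> (T1 \<union> (space (PA s) - A1)) \<times> space UZ"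
    proof
      fix az assume az0: "az \<in> Pair phi -` B"
      obtain a z where azd: "az = (a, z)" by (cases az)
      have az: "(a, z) \<in> Pair phi -` B" using az0 azd by simp
      have sp: "a \<in> space (PA s)" and bd: "bad1 s x i j (phi, a, z)"
        using az by (auto simp: B_def sample_space_def space_pair_measure)
      show "az \<in> (T1 \<union> (space (PA s) - A1)) \<times> space UZ"
      proof (cases "a \<in> A1")
        case False
        then show ?thesis using sp azd by simp
      next
        case True
      have aA: "\<forall>l\<in>{1..<s}. -1 \<le> a l \<and> a l \<le> 1" using True by (auto simp: A1_def)
      obtain k where k: "k \<in> {1..s}" "x i \<in> strip s phi a k" "x j \<in> strip s phi a k"
        using bd by (auto simp: bad1_def)
      have k1: "1 \<le> k" "k \<le> s" using k(1) by auto
      have r1: "-1 \<le> p1 \<and> p1 \<le> 1" unfolding p1_def by (rule strip_range[OF aA k1 k(2)])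
      have r2: "-1 \<le> p2 \<and> p2 \<le> 1" unfolding p2_def by (rule strip_range[OF aA k1 k(3)])
      have cond: "-1 \<le> lo \<and> hi \<le> 1" using r1 r2 by (auto simp: lo_def hi_def)
      have "a l \<in> X" if l: "l \<in> {1..<s}" for l
      proof -
        have "\<not> (lo \<le> a l \<and> a l < hi)"
        proof
          assume h: "lo \<le> a l \<and> a l < hi"
          show False
          proof (cases "p1 \<le> p2")
            case True
            then show False using strip_gap[OF k1 k(2) k(3) l] h
              by (simp add: lo_def hi_def p1_def p2_def)
          next
            case False
            then show False using strip_gap[OF k1 k(3) k(2) l] h
              by (simp add: lo_def hi_def p1_def p2_def)
          qed
        qed
        then show ?thesis using cond aA l by (auto simp: X_def)
      qed
      then have "a \<in> T1" using sp by (auto simp: T1_def)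
      then show ?thesis using azd by simp
      qed
    qed
    have "emeasure (PA s \<Otimes>\<^sub>M UZ) (Pair phi -` B) \<le> emeasure (PA s \<Otimes>\<^sub>M UZ) ((T1 \<union> (space (PA s) - A1)) \<times> space UZ)"
      by (rule emeasure_mono[OF sub]) (use T1s A1s in auto)
    also have "\<dots> = emeasure (PA s) (T1 \<union> (space (PA s) - A1)) * emeasure UZ (space UZ)"
      by (rule UZ.emeasure_pair_measure_Times) (use T1s A1s in auto)
    also have "\<dots> = emeasure (PA s) (T1 \<union> (space (PA s) - A1))" by (simp add: UZ.emeasure_space_1)
    also have "\<dots> \<le> emeasure (PA s) T1 + emeasure (PA s) (space (PA s) - A1)"
      by (rule emeasure_subadditive) (use T1s A1s in auto)
    also have "\<dots> = emeasure (PA s) T1" unfolding A1c by simp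
    also have "\<dots> = (\<Prod>l\<in>{1..<s}. emeasure UZ X)"
      unfolding T1_def by (rule PP.emeasure_PiM_Collect) (use Xs in auto)
    also have "\<dots> \<le> (\<Prod>l\<in>{1..<s}. ennreal (1 - t/2))"
      by (rule prod_mono_ennreal) (unfold X_def, rule UZ_X_bound[OF gap t(2) t(1)])
    also have "\<dots> = ennreal c" using t by (simp add: c_def ennreal_power)
    also have "\<dots> \<le> indicator E phi + ennreal c" by simp
    finally show ?thesis .
  qed
  have "emeasure (sample_space s) B \<le> (\<integral>\<^sup>+ phi. (indicator E phi + ennreal c) \<partial>UPhi)"
    unfolding sample_space_def
    by (rule section_le[OF R.sigma_finite_measure_axioms B[unfolded sample_space_def] sec])
  also have "\<dots> = emeasure UPhi E + ennreal c"
    using E prob_space.emeasure_space_1[OF ps_UPhi]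
    by (subst nn_integral_add) (auto simp: nn_integral_indicator)
  also have "emeasure UPhi E \<le> ennreal (3 * t / norm w)"
    unfolding E_def by (rule emeasure_UPhi_E[OF w0 t(1)])
  finally have "emeasure (sample_space s) B \<le> ennreal (3 * t / norm w + c)"
    using t c0 by (simp add: ennreal_plus[symmetric] del: ennreal_plus) 
  then have "ennreal (measure (sample_space s) B) \<le> ennreal (3 * t / norm w + c)"
    using finite_measure.emeasure_eq_measure[OF prob_space.finite_measure[OF ps_M]] by metis
  moreover have "0 \<le> 3 * t / norm w + c" using t c0 by simp
  ultimately have "measure (sample_space s) B \<le> 3 * t / norm w + c" using ennreal_le_iff by blast
  then show ?thesis unfolding B_def c_def by (simp add: dist_norm w_def)
qed

lemma num_bound:
  fixes s :: nat and d :: real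
  assumes s: "s \<ge> 2" and d: "d > real s powr (-1/3)"
  shows "3 * (real s powr (-2/3)) / d + (1 - real s powr (-2/3) / 2)^(s-1) \<le> 7 * real s powr (-1/3)"
proof -
  define t where "t = real s powr (-2/3)"
  define \<delta> where "\<delta> = real s powr (-1/3)"
  have sp: "real s > 0" using s by simp
  have t0: "t > 0" and d0: "\<delta> > 0" using s by (simp_all add: t_def \<delta>_def)
  have t1: "t \<le> 1"
  proof -
    have "real s powr (-2/3) \<le> real s powr 0" by (rule powr_mono) (use s in auto)
    then show ?thesis using s by (simp add: t_def)
  qed
  have tq: "t = \<delta> * \<delta>" unfolding t_def \<delta>_def by (simp add: powr_add[symmetric])
  have A: "3 * t / d \<le> 3 * \<delta>"
  proof -
    have "3 * t / d \<le> 3 * t / \<delta>" using d t0 d0 unfolding \<delta>_def[symmetric]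
      by (intro divide_left_mono) auto
    also have "\<dots> = 3 * \<delta>" using tq d0 by simp
    finally show ?thesis .
  qed
  have st: "real s * t = 1 / \<delta>"
  proof -
    have "real s * t = real s powr 1 * real s powr (-2/3)" using sp by (simp add: t_def)
    also have "\<dots> = real s powr (1/3)" unfolding powr_add[symmetric] by simp
    also have "\<dots> = 1 / \<delta>" by (simp add: \<delta>_def powr_minus_divide)
    finally show ?thesis .
  qed
  define y where "y = real (s - 1) * t / 2"
  have y: "y \<ge> real s * t / 4"
  proof -
    have "real (s - 1) \<ge> real s / 2" using s by (simp add: of_nat_diff)
    then show ?thesis unfolding y_def using t0 by (simp add: field_simps)
  qed
  have y0: "y > 0" using y st d0 by (smt (verit) divide_pos_pos)
  have "(1 - t/2)^(s-1) \<le> (exp (- t/2))^(s-1)"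
    using t1 by (intro power_mono) (use exp_ge_add_one_self[of "-t/2"] in auto)
  also have "\<dots> = exp (- y)" by (simp add: y_def exp_of_nat_mult[symmetric] algebra_simps)
  also have "\<dots> = 1 / exp y" by (simp add: exp_minus field_simps)
  also have "\<dots> \<le> 1 / y"
  proof -
    have "y \<le> exp y" using exp_ge_add_one_self[of y] by linarith
    then show ?thesis using y0 by (intro divide_left_mono) auto
  qed
  also have "\<dots> \<le> 1 / (real s * t / 4)" using y y0 st d0 by (intro divide_left_mono) auto
  also have "\<dots> = 4 * \<delta>" using st d0 by simp
  finally have B: "(1 - t/2)^(s-1) \<le> 4 * \<delta>" .
  show ?thesis using A B unfolding t_def[symmetric] \<delta>_def[symmetric] by simp
qed

theorem lemma5p3:
  "\<exists>C::real. \<forall>(s::nat) (m::nat) (x::nat \<Rightarrow> real \<times> real).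
     s \<ge> 2 \<longrightarrow> real m \<le> real s powr (1/10) \<longrightarrow>
     measure (sample_space s)
       {\<omega> \<in> space (sample_space s). good_event s m x (real s powr (-1/3)) \<omega>}
       \<ge> 1 - C * real s powr (-1/10)"
proof (intro exI[of _ 7] allI impI)
  fix s m :: nat and x :: "nat \<Rightarrow> real \<times> real"
  assume s: "s \<ge> 2" and m: "real m \<le> real s powr (1/10)"
  define \<delta> where "\<delta> = real s powr (-1/3)"
  have d0: "\<delta> > 0" using s by (simp add: \<delta>_def)
  interpret P: prob_space "sample_space s" by (rule ps_M)
  define Bad where "Bad = (\<lambda>p::nat\<times>nat. if fst p = snd p then {}
     else if dist (x (fst p)) (x (snd p)) > \<delta> then {\<omega>\<in>space (sample_space s). bad1 s x (fst p) (snd p) \<omega>}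
     else {\<omega>\<in>space (sample_space s). bad2 x (fst p) (snd p) \<omega>})"
  have Bs: "Bad p \<in> sets (sample_space s)" for p
    by (auto simp: Bad_def bad1_meas bad2_meas)
  have Bm: "measure (sample_space s) (Bad p) \<le> 7 * \<delta>" for p
  proof -
    obtain i j where p: "p = (i, j)" by (cases p)
    show ?thesis
    proof (cases "i = j")
      case True then show ?thesis using d0 by (simp add: Bad_def p)
    next
      case ij: False
      show ?thesis
      proof (cases "dist (x i) (x j) > \<delta>")
        case True
        define t where "t = real s powr (-2/3)"
        have t0: "0 < t" using s by (simp add: t_def)
        have t1: "t \<le> 1"
        proof -
          have "real s powr (-2/3) \<le> real s powr 0" by (rule powr_mono) (use s in auto)
          then show ?thesis using s by (simp add: t_def)
        qed
        have xij: "x i \<noteq> x j" using True d0 by auto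
        have "measure (sample_space s) (Bad p) = measure (sample_space s) {\<omega>\<in>space (sample_space s). bad1 s x i j \<omega>}"
          using ij True by (simp add: Bad_def p)
        also have "\<dots> \<le> 3 * t / dist (x i) (x j) + (1 - t/2)^(s-1)"
          by (rule bad1_bound[OF s t0 t1 xij])
        also have "\<dots> \<le> 7 * \<delta>" unfolding t_def \<delta>_def
          by (rule num_bound[OF s]) (use True in \<open>simp add: \<delta>_def\<close>)
        finally show ?thesis .
      next
        case False
        have "measure (sample_space s) (Bad p) = measure (sample_space s) {\<omega>\<in>space (sample_space s). bad2 x i j \<omega>}"
          using ij False by (simp add: Bad_def p)
        also have "\<dots> \<le> \<delta> / 2" by (rule bad2_bound) (use False in simp)
        also have "\<dots> \<le> 7 * \<delta>" using d0 by simp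
        finally show ?thesis .
      qed
    qed
  qed
  have G: "{\<omega> \<in> space (sample_space s). good_event s m x \<delta> \<omega>} =
      space (sample_space s) - (\<Union>p\<in>{1..m}\<times>{1..m}. Bad p)"
  proof (intro set_eqI iffI)
    fix \<omega> assume w: "\<omega> \<in> {\<omega> \<in> space (sample_space s). good_event s m x \<delta> \<omega>}"
    obtain phi a z where wd: "\<omega> = (phi, a, z)" by (cases \<omega>)
    have sp: "\<omega> \<in> space (sample_space s)" using w by simp
    have g: "\<forall>i\<in>{1..m}. \<forall>j\<in>{1..m}. i \<noteq> j \<longrightarrow> dist (x i) (x j) > \<delta> \<longrightarrow>
        (\<forall>k\<in>{1..s}. \<not> (x i \<in> strip s phi a k \<and> x j \<in> strip s phi a k))"
       "\<forall>i\<in>{1..m}. \<forall>j\<in>{1..m}. i \<noteq> j \<longrightarrow> dist (x i) (x j) \<le> \<delta> \<longrightarrow>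
        ((x i \<bullet> theta_perp phi < z \<and> x j \<bullet> theta_perp phi < z) \<or>
         (x i \<bullet> theta_perp phi > z \<and> x j \<bullet> theta_perp phi > z))"
      using w wd by (simp_all add: good_event_def)
    have "\<omega> \<notin> Bad (i, j)" if ij: "i \<in> {1..m}" "j \<in> {1..m}" for i j
    proof (cases "i = j")
      case False
      show ?thesis
      proof (cases "dist (x i) (x j) > \<delta>")
        case True
        have "\<not> bad1 s x i j \<omega>" using g(1) ij False True by (auto simp: bad1_def wd)
        then show ?thesis using False True by (simp add: Bad_def)
      next
        case F2: False
        have "\<not> bad2 x i j \<omega>" using g(2) ij False F2 by (auto simp: bad2_def wd)
        then show ?thesis using False F2 by (simp add: Bad_def)
      qed
    qed (simp add: Bad_def)
    then show "\<omega> \<in> space (sample_space s) - (\<Union>p\<in>{1..m}\<times>{1..m}. Bad p)"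
      using sp by auto
  next
    fix \<omega> assume w: "\<omega> \<in> space (sample_space s) - (\<Union>p\<in>{1..m}\<times>{1..m}. Bad p)"
    obtain phi a z where wd: "\<omega> = (phi, a, z)" by (cases \<omega>)
    have sp: "\<omega> \<in> space (sample_space s)" using w by simp
    have nb: "\<omega> \<notin> Bad (i, j)" if "i \<in> {1..m}" "j \<in> {1..m}" for i j using w that by blast
    have g1: "\<forall>k\<in>{1..s}. \<not> (x i \<in> strip s phi a k \<and> x j \<in> strip s phi a k)"
      if "i \<in> {1..m}" "j \<in> {1..m}" "i \<noteq> j" "dist (x i) (x j) > \<delta>" for i j
    proof -
      have "\<omega> \<notin> Bad (i, j)" by (rule nb[OF that(1,2)])
      then have "\<not> bad1 s x i j \<omega>" using that sp by (simp add: Bad_def)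
      then show ?thesis by (simp add: bad1_def wd)
    qed
    have g2: "(x i \<bullet> theta_perp phi < z \<and> x j \<bullet> theta_perp phi < z) \<or>
         (x i \<bullet> theta_perp phi > z \<and> x j \<bullet> theta_perp phi > z)"
      if "i \<in> {1..m}" "j \<in> {1..m}" "i \<noteq> j" "dist (x i) (x j) \<le> \<delta>" for i j
    proof -
      have "\<omega> \<notin> Bad (i, j)" by (rule nb[OF that(1,2)])
      then have "\<not> bad2 x i j \<omega>" using that sp by (simp add: Bad_def)
      then show ?thesis by (simp add: bad2_def wd)
    qed
    have "good_event s m x \<delta> \<omega>"
      unfolding wd good_event_def prod.case using g1 g2 by blast
    then show "\<omega> \<in> {\<omega> \<in> space (sample_space s). good_event s m x \<delta> \<omega>}" using sp by simp
  qed
  have U: "(\<Union>p\<in>{1..m}\<times>{1..m}. Bad p) \<in> sets (sample_space s)" using Bs by auto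
  have "measure (sample_space s) (\<Union>p\<in>{1..m}\<times>{1..m}. Bad p) \<le> (\<Sum>p\<in>{1..m}\<times>{1..m}. measure (sample_space s) (Bad p))"
    by (rule measure_UNION_le) (use Bs in auto)
  also have "\<dots> \<le> (\<Sum>p\<in>{1..m}\<times>{1..m}. 7 * \<delta>)" by (rule sum_mono) (rule Bm)
  also have "\<dots> = real m * real m * (7 * \<delta>)" by simp
  also have "\<dots> \<le> 7 * real s powr (-1/10)"
  proof -
    have m0: "0 \<le> real m" by simp
    have "real m * real m \<le> real s powr (1/10) * real s powr (1/10)"
      using m by (intro mult_mono) auto
    also have "\<dots> = real s powr (1/5)" unfolding powr_add[symmetric] by simp
    finally have mm: "real m * real m \<le> real s powr (1/5)" .
    have "real m * real m * (7 * \<delta>) \<le> real s powr (1/5) * (7 * \<delta>)"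
      using mm d0 by (intro mult_right_mono) auto
    also have "\<dots> = 7 * (real s powr (1/5) * real s powr (-1/3))" by (simp add: \<delta>_def)
    also have "real s powr (1/5) * real s powr (-1/3) = real s powr (-2/15)"
      unfolding powr_add[symmetric] by simp
    also have "real s powr (-2/15) \<le> real s powr (-1/10)" by (rule powr_mono) (use s in auto)
    finally show ?thesis by simp
  qed
  finally have UB: "measure (sample_space s) (\<Union>p\<in>{1..m}\<times>{1..m}. Bad p) \<le> 7 * real s powr (-1/10)" .
  have "measure (sample_space s) {\<omega> \<in> space (sample_space s). good_event s m x \<delta> \<omega>}
      = 1 - measure (sample_space s) (\<Union>p\<in>{1..m}\<times>{1..m}. Bad p)"
    unfolding G using P.prob_compl[OF U] by simp
  then show "measure (sample_space s) {\<omega> \<in> space (sample_space s). good_event s m x (real s powr (-1/3)) \<omega>}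
       \<ge> 1 - 7 * real s powr (-1/10)"
    using UB unfolding \<delta>_def by linarith
qed

end
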